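(* Work in the max-plus semifield $(\mathbb{R}\cup\{-\infty\},\oplus=\max,\otimes=+,\mathbb{0}=-\infty,\mathbb{1}=0)$. Let $m\geq1$, let $p_{1j},p_{2j}\in\mathbb{R}$, $w_{j}>0$, $d_{j}>0$, $h_{j}\in\mathbb{R}$ for $j=1,\ldots,m$, and let $f_{1}\leq g_{1}$, $f_{2}\leq g_{2}$, $a\leq b$ be reals. Consider the problem of minimizing over $(x_{1},x_{2})^{T}\in\mathbb{R}^{2}$ $$\max_{1\leq j\leq m}\big(w_{j}(|x_{1}-p_{1j}|+|x_{2}-p_{2j}|)+h_{j}\big)$$ subject to $|x_{1}-p_{1j}|+|x_{2}-p_{2j}|\leq d_{j}$ ($j=1,\ldots,m$), $f_{1}-x_{2}\leq x_{1}\leq g_{1}-x_{2}$, $f_{2}+x_{1}\leq x_{2}\leq g_{2}+x_{1}$, and $a\leq x_{1}\leq b$. In max-plus notation, let $\bm{o}_{j}=(o_{1j},o_{2j})^{T}$ with $o_{1j}=p_{1j}p_{2j}$, $o_{2j}=p_{1j}^{-1}p_{2j}$; let $\bm{f}=(f_{1},f_{2})^{T}$, $\bm{g}=(g_{1},g_{2})^{T}$, $$\bm{B}=\begin{pmatrix}\mathbb{0}&a^{2}\\ b^{-2}&\mathbb{0}\end{pmatrix},\qquad \bm{B}^{\ast}=\begin{pmatrix}\mathbb{1}&a^{2}\\ b^{-2}&\mathbb{1}\end{pmatrix};$$ $$\bm{s}=\bigoplus_{1\leq j\leq m}d_{j}^{-1}\bm{o}_{j}\oplus\bm{f},\qquad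 \bm{t}^{-}=\bigoplus_{1\leq j\leq m}d_{j}^{-1}\bm{o}_{j}^{-}\oplus\bm{g}^{-}.$$ Suppose $\bm{t}^{-}\bm{B}^{\ast}\bm{s}\leq\mathbb{1}$. Then the minimum value of the problem is $$\theta=\bigoplus_{1\leq j,l\leq m}\left(h_{j}^{\frac{w_{l}}{w_{j}+w_{l}}}h_{l}^{\frac{w_{j}}{w_{j}+w_{l}}}(\bm{o}_{j}^{-}\bm{B}^{\ast}\bm{o}_{l})^{\frac{w_{j}w_{l}}{w_{j}+w_{l}}}\oplus h_{j}(\bm{o}_{j}^{-}\bm{B}^{\ast}\bm{s})^{w_{j}}\oplus h_{l}(\bm{t}^{-}\bm{B}^{\ast}\bm{o}_{l})^{w_{l}}\right),$$ and, with $$\bm{q}=\bigoplus_{1\leq j\leq m}\theta^{-1/w_{j}}h_{j}^{1/w_{j}}\bm{o}_{j},\qquad \bm{r}^{-}=\bigoplus_{1\leq j\leq m}\theta^{-1/w_{j}}h_{j}^{1/w_{j}}\bm{o}_{j}^{-},$$ all solution vectors $\bm{x}=(x_{1},x_{2})^{T}$ have entries $x_{1}=y_{1}^{1/2}y_{2}^{-1/2}$, $x_{2}=y_{1}^{1/2}y_{2}^{1/2}$, where $\bm{y}=(y_{1},y_{2})^{T}=\bm{B}^{\ast}\bm{u}$ and the parameter vector $\bm{u}$ satisfies $\bm{q}\oplus\bm{s}\leq\bm{u}\leq((\bm{r}^{-}\oplus\bm{t}^{-})\bm{B}^{\ast})^{-}$.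
   Context: In the max-plus semifield, the product $xy$ means $x+y$, $x^{-1}=-x$, the power $x^{p}$ means $px$ for real $p$, and the order is the usual order of reals. Matrix and vector operations use $\max$ in place of addition and $+$ in place of multiplication; inequalities between vectors are componentwise. For a column vector $\bm{x}=(x_{i})$ with real entries, $\bm{x}^{-}$ is the row vector $(-x_{i})$ (and for a row vector, the column vector of negated entries). $\mathbb{0}=-\infty$ and $\mathbb{1}=0$. *)

theory Defs
  imports Complex_Main
begin

text \<open>Max-plus algebra on vectors of dimension 2 with real (finite) entries,
  represented as pairs. Column and row vectors are both pairs; which one is meant
  is fixed by the operation applied.\<close>

type_synonym vec2 = "real \<times> real"

definition mp_add :: "vec2 \<Rightarrow> vec2 \<Rightarrow> vec2" (infixl "\<oplus>\<^sub>v" 65) where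
  "x \<oplus>\<^sub>v y = (max (fst x) (fst y), max (snd x) (snd y))"

definition mp_scal :: "real \<Rightarrow> vec2 \<Rightarrow> vec2" where
  "mp_scal c x = (c + fst x, c + snd x)"

definition mp_conj :: "vec2 \<Rightarrow> vec2" where
  "mp_conj x = (- fst x, - snd x)"

definition mp_inner :: "vec2 \<Rightarrow> vec2 \<Rightarrow> real" where
  "mp_inner r x = max (fst r + fst x) (snd r + snd x)"

definition mp_bigadd :: "nat \<Rightarrow> (nat \<Rightarrow> vec2) \<Rightarrow> vec2" where
  "mp_bigadd m F = (Max ((\<lambda>j. fst (F j)) ` {1..m}), Max ((\<lambda>j. snd (F j)) ` {1..m}))"

text \<open>The matrix B* = [[1, a^2], [b^-2, 1]] (max-plus), i.e. entries
  [[0, 2a], [-2b, 0]] in ordinary notation, given by its entries (indices 1,2).\<close>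
definition Bstar :: "real \<Rightarrow> real \<Rightarrow> nat \<Rightarrow> nat \<Rightarrow> real" where
  "Bstar a b i k = (if i = 1 \<and> k = 1 then 0 else if i = 1 \<and> k = 2 then 2 * a
                    else if i = 2 \<and> k = 1 then - 2 * b else 0)"

definition mat_col :: "(nat \<Rightarrow> nat \<Rightarrow> real) \<Rightarrow> vec2 \<Rightarrow> vec2" where
  "mat_col A x = (max (A 1 1 + fst x) (A 1 2 + snd x), max (A 2 1 + fst x) (A 2 2 + snd x))"

definition row_mat :: "vec2 \<Rightarrow> (nat \<Rightarrow> nat \<Rightarrow> real) \<Rightarrow> vec2" where
  "row_mat r A = (max (fst r + A 1 1) (snd r + A 2 1), max (fst r + A 1 2) (snd r + A 2 2))"

definition vle :: "vec2 \<Rightarrow> vec2 \<Rightarrow> bool" where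
  "vle x y \<longleftrightarrow> fst x \<le> fst y \<and> snd x \<le> snd y"

definition objective :: "nat \<Rightarrow> (nat \<Rightarrow> real) \<Rightarrow> (nat \<Rightarrow> real) \<Rightarrow> (nat \<Rightarrow> real) \<Rightarrow> (nat \<Rightarrow> real)
    \<Rightarrow> real \<times> real \<Rightarrow> real" where
  "objective m p1 p2 w h x =
     Max ((\<lambda>j. w j * (\<bar>fst x - p1 j\<bar> + \<bar>snd x - p2 j\<bar>) + h j) ` {1..m})"

definition feasible :: "nat \<Rightarrow> (nat \<Rightarrow> real) \<Rightarrow> (nat \<Rightarrow> real) \<Rightarrow> (nat \<Rightarrow> real)
    \<Rightarrow> real \<Rightarrow> real \<Rightarrow> real \<Rightarrow> real \<Rightarrow> real \<Rightarrow> real \<Rightarrow> (real \<times> real) set" where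
  "feasible m p1 p2 d f1 g1 f2 g2 a b =
     {x. (\<forall>j\<in>{1..m}. \<bar>fst x - p1 j\<bar> + \<bar>snd x - p2 j\<bar> \<le> d j)
         \<and> f1 - snd x \<le> fst x \<and> fst x \<le> g1 - snd x
         \<and> f2 + fst x \<le> snd x \<and> snd x \<le> g2 + fst x
         \<and> a \<le> fst x \<and> fst x \<le> b}"

end

theory Submission
  imports Defs
begin

lemma vle_add_left: "vle (x \<oplus>\<^sub>v y) z \<longleftrightarrow> vle x z \<and> vle y z"
  by (auto simp: vle_def mp_add_def)

lemma vle_conj_add: "vle z (mp_conj (x \<oplus>\<^sub>v y)) \<longleftrightarrow> vle z (mp_conj x) \<and> vle z (mp_conj y)"
  by (auto simp: vle_def mp_add_def mp_conj_def)

lemma vle_bigadd: "m \<ge> 1 \<Longrightarrow> vle (mp_bigadd m F) z \<longleftrightarrow> (\<forall>j\<in>{1..m}. vle (F j) z)"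
  by (auto simp: vle_def mp_bigadd_def)

lemma vle_conj_bigadd: "m \<ge> 1 \<Longrightarrow> vle z (mp_conj (mp_bigadd m F)) \<longleftrightarrow> (\<forall>j\<in>{1..m}. vle z (mp_conj (F j)))"
proof -
  assume "m \<ge> 1"
  have "vle z (mp_conj (mp_bigadd m F)) \<longleftrightarrow>
     Max ((\<lambda>j. fst (F j)) ` {1..m}) \<le> - fst z \<and> Max ((\<lambda>j. snd (F j)) ` {1..m}) \<le> - snd z"
    by (auto simp: vle_def mp_bigadd_def mp_conj_def)
  also have "\<dots> \<longleftrightarrow> (\<forall>j\<in>{1..m}. vle z (mp_conj (F j)))"
    using \<open>m \<ge> 1\<close> by (auto simp: vle_def mp_conj_def)
  finally show ?thesis .
qed

lemma inner_le_iff: "mp_inner x z \<le> c \<longleftrightarrow> fst x \<le> c - fst z \<and> snd x \<le> c - snd z"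
  by (auto simp: mp_inner_def)

lemma inner_mat_le_iff: "mp_inner x (mat_col A y) \<le> c \<longleftrightarrow>
   fst y \<le> c - fst x - A 1 1 \<and> fst y \<le> c - snd x - A 2 1 \<and> snd y \<le> c - fst x - A 1 2 \<and> snd y \<le> c - snd x - A 2 2"
  by (auto simp: mp_inner_def mat_col_def)

lemma inner_add_le: "mp_inner (x \<oplus>\<^sub>v y) z \<le> c \<longleftrightarrow> mp_inner x z \<le> c \<and> mp_inner y z \<le> c"
  by (auto simp: inner_le_iff mp_add_def)

lemma inner_mat_add_le: "mp_inner x (mat_col A (y \<oplus>\<^sub>v z)) \<le> c \<longleftrightarrow>
   mp_inner x (mat_col A y) \<le> c \<and> mp_inner x (mat_col A z) \<le> c"
  by (auto simp: inner_mat_le_iff mp_add_def)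

lemma inner_bigadd_le: "m \<ge> 1 \<Longrightarrow> mp_inner (mp_bigadd m F) z \<le> c \<longleftrightarrow> (\<forall>j\<in>{1..m}. mp_inner (F j) z \<le> c)"
  by (auto simp: inner_le_iff mp_bigadd_def)

lemma inner_mat_bigadd_le: "m \<ge> 1 \<Longrightarrow> mp_inner x (mat_col A (mp_bigadd m F)) \<le> c \<longleftrightarrow>
   (\<forall>j\<in>{1..m}. mp_inner x (mat_col A (F j)) \<le> c)"
  by (auto simp: inner_mat_le_iff mp_bigadd_def)

lemma inner_scal_left: "mp_inner (mp_scal k x) z = k + mp_inner x z"
  by (simp add: mp_inner_def mp_scal_def max_add_distrib_right add.assoc)

lemma inner_scal_right: "mp_inner x (mp_scal k z) = k + mp_inner x z"
  by (simp add: mp_inner_def mp_scal_def max_add_distrib_right algebra_simps)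

lemma mat_scal: "mat_col A (mp_scal k x) = mp_scal k (mat_col A x)"
  by (simp add: mat_col_def mp_scal_def max_add_distrib_right algebra_simps)

definition Pc :: "real \<Rightarrow> real \<Rightarrow> vec2 \<Rightarrow> vec2 \<Rightarrow> vec2 \<Rightarrow> bool" where
  "Pc a b L V y \<longleftrightarrow> vle L y \<and> vle y (mp_conj V) \<and> 2*a \<le> fst y - snd y \<and> fst y - snd y \<le> 2*b"

lemma claimB: "a \<le> b \<Longrightarrow> (\<exists>y. Pc a b L V y) \<longleftrightarrow> mp_inner V (mat_col (Bstar a b) L) \<le> 0"
proof
  assume "\<exists>y. Pc a b L V y"
  then obtain y where "Pc a b L V y" by blast
  then show "mp_inner V (mat_col (Bstar a b) L) \<le> 0"
    by (auto simp: Pc_def vle_def mp_conj_def inner_mat_le_iff Bstar_def)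
next
  assume ab: "a \<le> b" and h: "mp_inner V (mat_col (Bstar a b) L) \<le> 0"
  have "Pc a b L V (max (fst L) (2*a + snd L), max (snd L) (fst L - 2*b))"
    using ab h by (auto simp: Pc_def vle_def mp_conj_def inner_mat_le_iff Bstar_def)
  then show "\<exists>y. Pc a b L V y" by blast
qed

lemma claimD: "a \<le> b \<Longrightarrow> Pc a b L V y \<longleftrightarrow>
   (\<exists>u. vle L u \<and> vle u (mp_conj (row_mat V (Bstar a b))) \<and> y = mat_col (Bstar a b) u)"
proof
  assume ab: "a \<le> b" and P: "Pc a b L V y"
  have "mat_col (Bstar a b) y = y" using P
    by (cases y) (auto simp: Pc_def mat_col_def Bstar_def)
  moreover have "vle y (mp_conj (row_mat V (Bstar a b)))" using P
    by (auto simp: Pc_def vle_def mp_conj_def row_mat_def Bstar_def)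
  ultimately show "\<exists>u. vle L u \<and> vle u (mp_conj (row_mat V (Bstar a b))) \<and> y = mat_col (Bstar a b) u"
    using P by (metis Pc_def)
next
  assume ab: "a \<le> b" and "\<exists>u. vle L u \<and> vle u (mp_conj (row_mat V (Bstar a b))) \<and> y = mat_col (Bstar a b) u"
  then obtain u where u: "vle L u" "vle u (mp_conj (row_mat V (Bstar a b)))" "y = mat_col (Bstar a b) u" by blast
  then show "Pc a b L V y" using ab
    by (auto simp: Pc_def vle_def mp_conj_def row_mat_def Bstar_def mat_col_def)
qed

lemma abs_sum_le: "\<bar>u::real\<bar> + \<bar>v\<bar> \<le> D \<longleftrightarrow> \<bar>u + v\<bar> \<le> D \<and> \<bar>v - u\<bar> \<le> D"
  by (auto simp: abs_if)

lemma dist_j: "\<bar>x1 - p1\<bar> + \<bar>x2 - p2\<bar> \<le> D \<longleftrightarrow>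
   vle (mp_scal (- D) (p1 + p2, - p1 + p2)) (x1 + x2, x2 - x1) \<and>
   vle (x1 + x2, x2 - x1) (mp_conj (mp_scal (- D) (mp_conj (p1 + p2, - p1 + p2))))"
  unfolding abs_sum_le by (auto simp: vle_def mp_scal_def mp_conj_def abs_le_iff)

lemma obj_j: "(w::real) > 0 \<Longrightarrow> w * (\<bar>x1 - p1\<bar> + \<bar>x2 - p2\<bar>) + h \<le> t \<longleftrightarrow>
   vle (mp_scal ((- 1 / w) * t + (1 / w) * h) (p1 + p2, - p1 + p2)) (x1 + x2, x2 - x1) \<and>
   vle (x1 + x2, x2 - x1) (mp_conj (mp_scal ((- 1 / w) * t + (1 / w) * h) (mp_conj (p1 + p2, - p1 + p2))))"
proof -
  assume w: "w > 0"
  have "w * (\<bar>x1 - p1\<bar> + \<bar>x2 - p2\<bar>) + h \<le> t \<longleftrightarrow> \<bar>x1 - p1\<bar> + \<bar>x2 - p2\<bar> \<le> (t - h) / w"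
    using w by (simp add: pos_le_divide_eq algebra_simps)
  moreover have e: "(- 1 / w) * t + (1 / w) * h = - ((t - h) / w)" using w by (simp add: field_simps)
  ultimately show ?thesis unfolding e using dist_j[of x1 p1 x2 p2 "(t - h) / w"] by simp
qed

lemma F1: "(wj::real) > 0 \<Longrightarrow> wl > 0 \<Longrightarrow>
  (wl / (wj + wl)) * hj + (wj / (wj + wl)) * hl + (wj * wl / (wj + wl)) * c \<le> t \<longleftrightarrow>
  ((- 1 / wj) * t + (1 / wj) * hj) + ((- 1 / wl) * t + (1 / wl) * hl) + c \<le> 0"
proof -
  assume a: "wj > 0" "wl > 0"
  define K where "K = wj * wl / (wj + wl)"
  have K: "K > 0" using a by (simp add: K_def)
  have s: "wj + wl \<noteq> 0" using a by simp
  have "(wl / (wj + wl)) * hj + (wj / (wj + wl)) * hl + (wj * wl / (wj + wl)) * c - t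
     = K * (((- 1 / wj) * t + (1 / wj) * hj) + ((- 1 / wl) * t + (1 / wl) * hl) + c)"
  proof -
    have ka: "K = wj * (wl / (wj + wl))" and kb: "K = wl * (wj / (wj + wl))" by (simp_all add: K_def)
    have k1: "K / wj = wl / (wj + wl)" using a by (subst ka) simp
    have k2: "K / wl = wj / (wj + wl)" using a by (subst kb) simp
    have k3: "wl / (wj + wl) + wj / (wj + wl) = 1" using s by (simp add: add_divide_distrib[symmetric])
    have "K * (((- 1 / wj) * t + (1 / wj) * hj) + ((- 1 / wl) * t + (1 / wl) * hl) + c)
       = (K / wj) * (hj - t) + (K / wl) * (hl - t) + K * c" by (simp add: algebra_simps diff_divide_distrib)
    also have "\<dots> = (wl / (wj + wl)) * hj + (wj / (wj + wl)) * hl + K * c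
        - (wl / (wj + wl) + wj / (wj + wl)) * t" unfolding k1 k2 by (simp add: algebra_simps diff_divide_distrib)
    finally show ?thesis unfolding k3 K_def by simp
  qed
  then show ?thesis using K
    by (smt (verit) mult_pos_pos mult_le_0_iff)
qed

lemma F2: "(w::real) > 0 \<Longrightarrow> h + w * e \<le> t \<longleftrightarrow> ((- 1 / w) * t + (1 / w) * h) + e \<le> 0"
proof -
  assume w: "w > 0"
  have "h + w * e - t = w * (((- 1 / w) * t + (1 / w) * h) + e)" using w by (simp add: field_simps)
  then show ?thesis using w by (smt (verit) mult_pos_pos mult_le_0_iff)
qed

lemma yx_iff: "(fst x = (1/2) * fst y + (- 1/2) * snd y \<and> snd x = (1/2) * fst y + (1/2) * snd y)
   \<longleftrightarrow> (fst x + snd x, snd x - fst x) = (y::vec2)"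
  by (cases x; cases y) (auto simp: field_simps)


theorem theorem4:
  fixes m :: nat and p1 p2 w d h :: "nat \<Rightarrow> real"
    and f1 g1 f2 g2 a b :: real
  assumes hm: "m \<ge> 1"
    and hw: "\<forall>j\<in>{1..m}. w j > 0"
    and hd: "\<forall>j\<in>{1..m}. d j > 0"
    and hf1: "f1 \<le> g1" and hf2: "f2 \<le> g2" and hab: "a \<le> b"
  defines "oo \<equiv> (\<lambda>j. (p1 j + p2 j, - p1 j + p2 j))"
  defines "s \<equiv> mp_bigadd m (\<lambda>j. mp_scal (- d j) (oo j)) \<oplus>\<^sub>v (f1, f2)"
  defines "tm \<equiv> mp_bigadd m (\<lambda>j. mp_scal (- d j) (mp_conj (oo j))) \<oplus>\<^sub>v mp_conj (g1, g2)"
  assumes hcond: "mp_inner tm (mat_col (Bstar a b) s) \<le> 0"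
  defines "\<theta> \<equiv> Max ((\<lambda>(j, l).
              max (max ((w l / (w j + w l)) * h j + (w j / (w j + w l)) * h l
                        + (w j * w l / (w j + w l)) * mp_inner (mp_conj (oo j)) (mat_col (Bstar a b) (oo l)))
                       (h j + w j * mp_inner (mp_conj (oo j)) (mat_col (Bstar a b) s)))
                  (h l + w l * mp_inner tm (mat_col (Bstar a b) (oo l))))
            ` ({1..m} \<times> {1..m}))"
  defines "q \<equiv> mp_bigadd m (\<lambda>j. mp_scal ((- 1 / w j) * \<theta> + (1 / w j) * h j) (oo j))"
  defines "rm \<equiv> mp_bigadd m (\<lambda>j. mp_scal ((- 1 / w j) * \<theta> + (1 / w j) * h j) (mp_conj (oo j)))"
  shows "\<theta> \<in> objective m p1 p2 w h ` feasible m p1 p2 d f1 g1 f2 g2 a b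
       \<and> (\<forall>x\<in>feasible m p1 p2 d f1 g1 f2 g2 a b. \<theta> \<le> objective m p1 p2 w h x)
       \<and> {x \<in> feasible m p1 p2 d f1 g1 f2 g2 a b. objective m p1 p2 w h x = \<theta>} =
         {x. \<exists>u y. vle (q \<oplus>\<^sub>v s) u
                 \<and> vle u (mp_conj (row_mat (rm \<oplus>\<^sub>v tm) (Bstar a b)))
                 \<and> y = mat_col (Bstar a b) u
                 \<and> fst x = (1/2) * fst y + (- 1/2) * snd y
                 \<and> snd x = (1/2) * fst y + (1/2) * snd y}"
proof -
  let ?B = "Bstar a b"
  let ?F = "feasible m p1 p2 d f1 g1 f2 g2 a b"
  let ?obj = "objective m p1 p2 w h"
  define qf where "qf t = mp_bigadd m (\<lambda>j. mp_scal ((- 1 / w j) * t + (1 / w j) * h j) (oo j))" for t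
  define rf where "rf t = mp_bigadd m (\<lambda>j. mp_scal ((- 1 / w j) * t + (1 / w j) * h j) (mp_conj (oo j)))" for t
  define yx where "yx x = (fst x + snd x, snd x - fst x)" for x :: vec2
  have hw': "\<And>j. 1 \<le> j \<Longrightarrow> j \<le> m \<Longrightarrow> 0 < w j" using hw by auto
  have A: "x \<in> ?F \<and> ?obj x \<le> t \<longleftrightarrow> Pc a b (qf t \<oplus>\<^sub>v s) (rf t \<oplus>\<^sub>v tm) (yx x)" for x t
  proof -
    obtain x1 x2 where x: "x = (x1, x2)" by (cases x)
    have objle: "?obj x \<le> t \<longleftrightarrow> (\<forall>j\<in>{1..m}. w j * (\<bar>x1 - p1 j\<bar> + \<bar>x2 - p2 j\<bar>) + h j \<le> t)"
      using hm by (simp add: objective_def x)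
    have O: "\<forall>j\<in>{1..m}. (w j * (\<bar>x1 - p1 j\<bar> + \<bar>x2 - p2 j\<bar>) + h j \<le> t) \<longleftrightarrow>
       vle (mp_scal ((- 1 / w j) * t + (1 / w j) * h j) (oo j)) (yx x) \<and>
       vle (yx x) (mp_conj (mp_scal ((- 1 / w j) * t + (1 / w j) * h j) (mp_conj (oo j))))"
      using obj_j hw by (simp add: oo_def yx_def x)
    have D: "\<forall>j\<in>{1..m}. (\<bar>x1 - p1 j\<bar> + \<bar>x2 - p2 j\<bar> \<le> d j) \<longleftrightarrow>
       vle (mp_scal (- d j) (oo j)) (yx x) \<and>
       vle (yx x) (mp_conj (mp_scal (- d j) (mp_conj (oo j))))"
      using dist_j by (simp add: oo_def yx_def x)
    have P: "Pc a b (qf t \<oplus>\<^sub>v s) (rf t \<oplus>\<^sub>v tm) (yx x) \<longleftrightarrow>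
      (\<forall>j\<in>{1..m}. vle (mp_scal ((- 1 / w j) * t + (1 / w j) * h j) (oo j)) (yx x)) \<and>
      (\<forall>j\<in>{1..m}. vle (yx x) (mp_conj (mp_scal ((- 1 / w j) * t + (1 / w j) * h j) (mp_conj (oo j))))) \<and>
      (\<forall>j\<in>{1..m}. vle (mp_scal (- d j) (oo j)) (yx x)) \<and>
      (\<forall>j\<in>{1..m}. vle (yx x) (mp_conj (mp_scal (- d j) (mp_conj (oo j))))) \<and>
      vle (f1, f2) (yx x) \<and> vle (yx x) (mp_conj (mp_conj (g1, g2))) \<and>
      2 * a \<le> fst (yx x) - snd (yx x) \<and> fst (yx x) - snd (yx x) \<le> 2 * b"
      unfolding Pc_def s_def tm_def qf_def rf_def
      using hm by (simp add: vle_add_left vle_conj_add vle_bigadd vle_conj_bigadd) blast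
    have E: "vle (f1, f2) (yx x) \<and> vle (yx x) (mp_conj (mp_conj (g1, g2))) \<and>
      2 * a \<le> fst (yx x) - snd (yx x) \<and> fst (yx x) - snd (yx x) \<le> 2 * b \<longleftrightarrow>
      f1 - x2 \<le> x1 \<and> x1 \<le> g1 - x2 \<and> f2 + x1 \<le> x2 \<and> x2 \<le> g2 + x1 \<and> a \<le> x1 \<and> x1 \<le> b"
      by (auto simp: vle_def mp_conj_def yx_def x)
    show ?thesis
      unfolding P objle using O D E by (auto simp: feasible_def x)
  qed
  have C: "mp_inner (rf t \<oplus>\<^sub>v tm) (mat_col ?B (qf t \<oplus>\<^sub>v s)) \<le> 0 \<longleftrightarrow> \<theta> \<le> t" for t
  proof -
    define c where "c j = (- 1 / w j) * t + (1 / w j) * h j" for j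
    have L: "mp_inner (rf t \<oplus>\<^sub>v tm) (mat_col ?B (qf t \<oplus>\<^sub>v s)) \<le> 0 \<longleftrightarrow>
      (\<forall>l\<in>{1..m}. (\<forall>j\<in>{1..m}. c l + (c j + mp_inner (mp_conj (oo j)) (mat_col ?B (oo l))) \<le> 0) \<and>
          c l + mp_inner tm (mat_col ?B (oo l)) \<le> 0) \<and>
      (\<forall>j\<in>{1..m}. c j + mp_inner (mp_conj (oo j)) (mat_col ?B s) \<le> 0)"
      unfolding rf_def qf_def c_def[symmetric]
      apply (simp only: inner_add_le inner_mat_add_le inner_bigadd_le[OF hm] inner_mat_bigadd_le[OF hm])
      using hcond by (simp add: inner_scal_left inner_scal_right mat_scal)
    have fin: "finite ({1..m} \<times> {1..m})" by simp
    have ne: "{1..m} \<times> {1..m} \<noteq> {}" using hm by simp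
    have R: "\<theta> \<le> t \<longleftrightarrow> (\<forall>j\<in>{1..m}. \<forall>l\<in>{1..m}.
       (w l / (w j + w l)) * h j + (w j / (w j + w l)) * h l
          + (w j * w l / (w j + w l)) * mp_inner (mp_conj (oo j)) (mat_col ?B (oo l)) \<le> t \<and>
       h j + w j * mp_inner (mp_conj (oo j)) (mat_col ?B s) \<le> t \<and>
       h l + w l * mp_inner tm (mat_col ?B (oo l)) \<le> t)"
      unfolding \<theta>_def using fin ne by (simp add: Max_le_iff)
    have T1: "\<forall>j\<in>{1..m}. \<forall>l\<in>{1..m}.
       ((w l / (w j + w l)) * h j + (w j / (w j + w l)) * h l
          + (w j * w l / (w j + w l)) * mp_inner (mp_conj (oo j)) (mat_col ?B (oo l)) \<le> t) \<longleftrightarrow>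
       c l + (c j + mp_inner (mp_conj (oo j)) (mat_col ?B (oo l))) \<le> 0"
    proof (intro ballI)
      fix j l assume j: "j \<in> {1..m}" and l: "l \<in> {1..m}"
      have e: "c l + (c j + mp_inner (mp_conj (oo j)) (mat_col ?B (oo l))) =
        (c j + c l) + mp_inner (mp_conj (oo j)) (mat_col ?B (oo l))" by simp
      show "((w l / (w j + w l)) * h j + (w j / (w j + w l)) * h l
          + (w j * w l / (w j + w l)) * mp_inner (mp_conj (oo j)) (mat_col ?B (oo l)) \<le> t) \<longleftrightarrow>
       c l + (c j + mp_inner (mp_conj (oo j)) (mat_col ?B (oo l))) \<le> 0"
        unfolding e c_def using F1[of "w j" "w l"] hw j l by (simp; smt (verit))
    qed
    have T2: "\<forall>j\<in>{1..m}. (h j + w j * mp_inner (mp_conj (oo j)) (mat_col ?B s) \<le> t) \<longleftrightarrow>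
       c j + mp_inner (mp_conj (oo j)) (mat_col ?B s) \<le> 0"
      using F2 hw unfolding c_def by simp
    have T3: "\<forall>l\<in>{1..m}. (h l + w l * mp_inner tm (mat_col ?B (oo l)) \<le> t) \<longleftrightarrow>
       c l + mp_inner tm (mat_col ?B (oo l)) \<le> 0"
      using F2 hw unfolding c_def by simp
    have ex: "\<exists>k. k \<in> {1..m}" using hm by auto
    show ?thesis unfolding L R using T1 T2 T3 ex by blast
  qed
  have inv: "yx ((fst y - snd y) / 2, (fst y + snd y) / 2) = y" for y
    by (cases y) (simp add: yx_def field_simps)
  have lower: "\<theta> \<le> ?obj x" if "x \<in> ?F" for x
  proof -
    have "Pc a b (qf (?obj x) \<oplus>\<^sub>v s) (rf (?obj x) \<oplus>\<^sub>v tm) (yx x)" using A that by blast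
    then have "mp_inner (rf (?obj x) \<oplus>\<^sub>v tm) (mat_col ?B (qf (?obj x) \<oplus>\<^sub>v s)) \<le> 0"
      using claimB[OF hab] by blast
    then show ?thesis using C by blast
  qed
  have ex: "\<exists>x. x \<in> ?F \<and> ?obj x \<le> \<theta>"
  proof -
    have "mp_inner (rf \<theta> \<oplus>\<^sub>v tm) (mat_col ?B (qf \<theta> \<oplus>\<^sub>v s)) \<le> 0" using C by blast
    then obtain y where "Pc a b (qf \<theta> \<oplus>\<^sub>v s) (rf \<theta> \<oplus>\<^sub>v tm) y" using claimB[OF hab] by blast
    then show ?thesis using A inv by metis
  qed
  have eqv: "x \<in> ?F \<and> ?obj x = \<theta> \<longleftrightarrow> x \<in> ?F \<and> ?obj x \<le> \<theta>" for x
    using lower[of x] by auto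
  have qq: "q = qf \<theta>" and rr: "rm = rf \<theta>" by (simp_all add: q_def qf_def rm_def rf_def)
  have S: "{x \<in> ?F. ?obj x = \<theta>} =
         {x. \<exists>u y. vle (q \<oplus>\<^sub>v s) u
                 \<and> vle u (mp_conj (row_mat (rm \<oplus>\<^sub>v tm) (Bstar a b)))
                 \<and> y = mat_col (Bstar a b) u
                 \<and> fst x = (1/2) * fst y + (- 1/2) * snd y
                 \<and> snd x = (1/2) * fst y + (1/2) * snd y}"
  proof (rule set_eqI)
    fix x
    have "x \<in> {x \<in> ?F. ?obj x = \<theta>} \<longleftrightarrow> Pc a b (qf \<theta> \<oplus>\<^sub>v s) (rf \<theta> \<oplus>\<^sub>v tm) (yx x)"
      using eqv A by blast
    also have "\<dots> \<longleftrightarrow> (\<exists>u. vle (q \<oplus>\<^sub>v s) u \<and> vle u (mp_conj (row_mat (rm \<oplus>\<^sub>v tm) ?B))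
        \<and> yx x = mat_col ?B u)"
      unfolding qq rr by (rule claimD[OF hab])
    also have "\<dots> \<longleftrightarrow> x \<in> {x. \<exists>u y. vle (q \<oplus>\<^sub>v s) u
                 \<and> vle u (mp_conj (row_mat (rm \<oplus>\<^sub>v tm) (Bstar a b)))
                 \<and> y = mat_col (Bstar a b) u
                 \<and> fst x = (1/2) * fst y + (- 1/2) * snd y
                 \<and> snd x = (1/2) * fst y + (1/2) * snd y}"
      using yx_iff[of x] unfolding yx_def by (auto simp: yx_iff)
    finally show "x \<in> {x \<in> ?F. ?obj x = \<theta>} \<longleftrightarrow> x \<in> {x. \<exists>u y. vle (q \<oplus>\<^sub>v s) u
                 \<and> vle u (mp_conj (row_mat (rm \<oplus>\<^sub>v tm) (Bstar a b)))
                 \<and> y = mat_col (Bstar a b) u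
                 \<and> fst x = (1/2) * fst y + (- 1/2) * snd y
                 \<and> snd x = (1/2) * fst y + (1/2) * snd y}" .
  qed
  have att: "\<theta> \<in> ?obj ` ?F"
  proof -
    obtain x where "x \<in> ?F" "?obj x \<le> \<theta>" using ex by blast
    then have "?obj x = \<theta>" using lower[of x] by auto
    then show ?thesis using \<open>x \<in> ?F\<close> by (metis image_eqI)
  qed
  show ?thesis using att lower S by blast
qed

end
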